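(* The $K_3$-WORM feasible sets of $K_3$-WORM-colorable graphs may contain arbitrarily large gaps: for every positive integer $m$ there exist a $K_3$-WORM-colorable graph $G$ and an integer $a$ such that $W^-(G,K_3)<a$, $a+m-1<W^+(G,K_3)$, and none of $a,a+1,\dots,a+m-1$ belongs to $\Phi_W(G,K_3)$.
   Context: A $K_3$-WORM coloring of a graph $G$ is an assignment of colors to the vertices of $G$ such that the three vertices of every triangle of $G$ receive exactly two distinct colors. $G$ is $K_3$-WORM-colorable if it has such a coloring; then $W^-(G,K_3)$ and $W^+(G,K_3)$ are the minimum and maximum number of colors used in a $K_3$-WORM coloring of $G$, and the feasible set $\Phi_W(G,K_3)$ is the set of integers $s$ such that $G$ has a $K_3$-WORM coloring using exactly $s$ colors. $G$ has a gap at $k$ if $W^-(G,K_3)<k<W^+(G,K_3)$ and $k\notin\Phi_W(G,K_3)$. *)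

theory Defs
  imports Main
begin

definition simple_graph :: "'a set \<Rightarrow> ('a \<Rightarrow> 'a \<Rightarrow> bool) \<Rightarrow> bool" where
  "simple_graph V E \<longleftrightarrow> finite V \<and> (\<forall>u v. E u v \<longrightarrow> u \<in> V \<and> v \<in> V) \<and>
     (\<forall>u v. E u v \<longrightarrow> E v u) \<and> (\<forall>v. \<not> E v v)"

definition triangle :: "('a \<Rightarrow> 'a \<Rightarrow> bool) \<Rightarrow> 'a \<Rightarrow> 'a \<Rightarrow> 'a \<Rightarrow> bool" where
  "triangle E x y z \<longleftrightarrow> E x y \<and> E y z \<and> E x z"

definition worm_coloring :: "'a set \<Rightarrow> ('a \<Rightarrow> 'a \<Rightarrow> bool) \<Rightarrow> ('a \<Rightarrow> nat) \<Rightarrow> bool" where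
  "worm_coloring V E c \<longleftrightarrow>
     (\<forall>x y z. triangle E x y z \<longrightarrow> card {c x, c y, c z} = 2)"

definition num_colors :: "'a set \<Rightarrow> ('a \<Rightarrow> nat) \<Rightarrow> nat" where
  "num_colors V c = card (c ` V)"

definition worm_colorable :: "'a set \<Rightarrow> ('a \<Rightarrow> 'a \<Rightarrow> bool) \<Rightarrow> bool" where
  "worm_colorable V E \<longleftrightarrow> (\<exists>c. worm_coloring V E c)"

definition worm_feasible :: "'a set \<Rightarrow> ('a \<Rightarrow> 'a \<Rightarrow> bool) \<Rightarrow> nat set" where
  "worm_feasible V E = {s. \<exists>c. worm_coloring V E c \<and> num_colors V c = s}"

definition worm_min :: "'a set \<Rightarrow> ('a \<Rightarrow> 'a \<Rightarrow> bool) \<Rightarrow> nat" where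
  "worm_min V E = Min (worm_feasible V E)"

definition worm_max :: "'a set \<Rightarrow> ('a \<Rightarrow> 'a \<Rightarrow> bool) \<Rightarrow> nat" where
  "worm_max V E = Max (worm_feasible V E)"

end

theory Submission imports Defs "HOL-Library.Countable" begin

datatype vt = X | Y | A nat | B nat | C nat | D nat | Z nat nat

instance vt :: countable by countable_datatype

fun adj :: "nat \<Rightarrow> vt \<Rightarrow> vt \<Rightarrow> bool" where
  "adj N X Y = True"
| "adj N Y X = True"
| "adj N X (A j) = (j < N)"
| "adj N (A j) X = (j < N)"
| "adj N X (B j) = (j < N)"
| "adj N (B j) X = (j < N)"
| "adj N Y (A j) = (j < N)"
| "adj N (A j) Y = (j < N)"
| "adj N Y (B j) = (j < N)"
| "adj N (B j) Y = (j < N)"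
| "adj N (A i) (B j) = (i = j \<and> j < N)"
| "adj N (B i) (A j) = (i = j \<and> j < N)"
| "adj N (A i) (C j) = (i = j \<and> j < N)"
| "adj N (C i) (A j) = (i = j \<and> j < N)"
| "adj N (A i) (D j) = (i = j \<and> j < N)"
| "adj N (D i) (A j) = (i = j \<and> j < N)"
| "adj N (B i) (C j) = (i = j \<and> j < N)"
| "adj N (C i) (B j) = (i = j \<and> j < N)"
| "adj N (B i) (D j) = (i = j \<and> j < N)"
| "adj N (D i) (B j) = (i = j \<and> j < N)"
| "adj N (C i) (D j) = (i = j \<and> j < N)"
| "adj N (D i) (C j) = (i = j \<and> j < N)"
| "adj N (Z i j) (A k) = (i < j \<and> j < N \<and> (k = i \<or> k = j))"
| "adj N (A k) (Z i j) = (i < j \<and> j < N \<and> (k = i \<or> k = j))"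
| "adj N (Z i j) (B k) = (i < j \<and> j < N \<and> k = i)"
| "adj N (B k) (Z i j) = (i < j \<and> j < N \<and> k = i)"
| "adj N (Z i j) (C k) = (i < j \<and> j < N \<and> k = j)"
| "adj N (C k) (Z i j) = (i < j \<and> j < N \<and> k = j)"
| "adj N (Z i j) (D k) = (i < j \<and> j < N \<and> k = j)"
| "adj N (D k) (Z i j) = (i < j \<and> j < N \<and> k = j)"
| "adj N _ _ = False"

definition Vs :: "nat \<Rightarrow> vt set" where
  "Vs N = {X, Y} \<union> A ` {..<N} \<union> B ` {..<N} \<union> C ` {..<N} \<union> D ` {..<N}
          \<union> (\<lambda>(i,j). Z i j) ` {(i,j). i < j \<and> j < N}"

lemma finite_Vs: "finite (Vs N)"
proof -
  have "{(i,j). i < j \<and> j < N} \<subseteq> {..<N} \<times> {..<N}" by auto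
  hence "finite {(i,j). i < j \<and> j < (N::nat)}" by (rule finite_subset) auto
  thus ?thesis unfolding Vs_def by auto
qed

lemma adj_in: "adj N u v \<Longrightarrow> u \<in> Vs N"
  by (cases u; cases v) (auto simp: Vs_def)

lemma adj_sym: "adj N u v \<Longrightarrow> adj N v u"
  by (cases u; cases v) auto

lemma adj_irr: "\<not> adj N v v"
  by (cases v) auto

lemma card3: "card {a,b,c} = 2 \<longleftrightarrow> ((a = b \<and> b \<noteq> c) \<or> (a \<noteq> b \<and> (a = c \<or> b = c)))"
  by (auto simp: card_insert_if)

definition wc :: "nat \<Rightarrow> (vt \<Rightarrow> nat) \<Rightarrow> bool" where
  "wc N c \<longleftrightarrow> (\<forall>u v w. adj N u v \<and> adj N v w \<and> adj N u w \<longrightarrow> card {c u, c v, c w} = 2)"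

fun cA :: "vt \<Rightarrow> nat" where
  "cA X = 0" | "cA Y = 1" | "cA (A j) = 0" | "cA (B j) = 1" | "cA (C j) = 0" | "cA (D j) = 1"
| "cA (Z i j) = 1"

fun cB :: "vt \<Rightarrow> nat" where
  "cB X = 0" | "cB Y = 0" | "cB (A j) = Suc j" | "cB (B j) = Suc j" | "cB (C j) = 0" | "cB (D j) = 0"
| "cB (Z i j) = Suc j"

lemma wc_cA: "wc N cA"
  unfolding wc_def
  apply (intro allI impI)
  subgoal for u v w by (cases u; cases v; cases w) (auto simp: card3)
  done

lemma wc_cB: "wc N cB"
  unfolding wc_def
  apply (intro allI impI)
  subgoal for u v w by (cases u; cases v; cases w) (auto simp: card3)
  done

lemma tri:
  assumes "wc N c" "adj N u v" "adj N v w" "adj N u w"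
  shows "(c u = c v \<and> c v \<noteq> c w) \<or> (c u \<noteq> c v \<and> (c u = c w \<or> c v = c w))"
  using assms unfolding wc_def card3[symmetric] by blast

lemma modeA:
  assumes w: "wc N c" and ne: "c X \<noteq> c Y"
  shows "c ` Vs N \<subseteq> {c X, c Y}"
proof -
  have AB: "c (A j) \<in> {c X, c Y} \<and> c (B j) \<in> {c X, c Y} \<and> c (A j) \<noteq> c (B j)" if "j < N" for j
  proof -
    have 1: "c (A j) \<in> {c X, c Y}" using tri[OF w, of X Y "A j"] that ne by auto
    have 2: "c (B j) \<in> {c X, c Y}" using tri[OF w, of X Y "B j"] that ne by auto
    have 3: "c (A j) \<noteq> c (B j)"
      using tri[OF w, of X "A j" "B j"] tri[OF w, of Y "A j" "B j"] that 1 by auto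
    show ?thesis using 1 2 3 by blast
  qed
  have CD: "c (C j) \<in> {c X, c Y} \<and> c (D j) \<in> {c X, c Y}" if "j < N" for j
    using AB[OF that] tri[OF w, of "A j" "B j" "C j"] tri[OF w, of "A j" "B j" "D j"] that by auto
  have ZZ: "c (Z i j) \<in> {c X, c Y}" if "i < j" "j < N" for i j
  proof -
    have "i < N" using that by simp
    thus ?thesis using AB[of i] tri[OF w, of "Z i j" "A i" "B i"] that by auto
  qed
  show ?thesis unfolding Vs_def using AB CD ZZ by auto
qed

lemma modeB:
  assumes w: "wc N c" and eq: "c X = c Y"
  shows "card (c ` Vs N) \<ge> Suc N"
proof -
  have AB: "c (A j) \<noteq> c X \<and> c (A j) = c (B j)" if "j < N" for j
  proof -
    have 1: "c (A j) \<noteq> c X" using tri[OF w, of X Y "A j"] that eq by auto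
    have 2: "c (B j) \<noteq> c X" using tri[OF w, of X Y "B j"] that eq by auto
    have 3: "c (A j) = c (B j)" using tri[OF w, of X "A j" "B j"] that 1 2 by auto
    show ?thesis using 1 3 by blast
  qed
  have dist: "c (A i) \<noteq> c (A j)" if "i < j" "j < N" for i j
  proof -
    have iN: "i < N" using that by simp
    have a: "c (A j) = c (B j)" using AB that by blast
    have 1: "c (C j) \<noteq> c (A j)" using tri[OF w, of "A j" "B j" "C j"] that a by auto
    have 2: "c (D j) \<noteq> c (A j)" using tri[OF w, of "A j" "B j" "D j"] that a by auto
    have 3: "c (C j) = c (D j)" using tri[OF w, of "A j" "C j" "D j"] that 1 2 by auto
    have 4: "c (Z i j) \<noteq> c (C j)" using tri[OF w, of "Z i j" "C j" "D j"] that 3 by auto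
    have 5: "c (Z i j) = c (A j)" using tri[OF w, of "Z i j" "A j" "C j"] that 1 4 by auto
    have 6: "c (A i) = c (B i)" using AB iN by blast
    show ?thesis using tri[OF w, of "Z i j" "A i" "B i"] that 5 6 by auto
  qed
  have inj: "inj_on (\<lambda>j. c (A j)) {..<N}"
  proof (rule inj_onI)
    fix i j assume "i \<in> {..<N}" "j \<in> {..<N}" "c (A i) = c (A j)"
    thus "i = j" using dist[of i j] dist[of j i] by (cases i j rule: linorder_cases) auto
  qed
  have sub: "insert (c X) ((\<lambda>j. c (A j)) ` {..<N}) \<subseteq> c ` Vs N"
    unfolding Vs_def by auto
  have nin: "c X \<notin> (\<lambda>j. c (A j)) ` {..<N}"
  proof
    assume "c X \<in> (\<lambda>j. c (A j)) ` {..<N}"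
    then obtain j where "j < N" "c X = c (A j)" by blast
    thus False using AB[of j] by simp
  qed
  have "card (insert (c X) ((\<lambda>j. c (A j)) ` {..<N})) = Suc N"
    using nin card_image[OF inj] by simp
  moreover have "finite (c ` Vs N)" using finite_Vs by simp
  ultimately show ?thesis using card_mono[OF _ sub] by metis
qed

definition VV :: "nat \<Rightarrow> nat set" where "VV N = to_nat ` Vs N"
definition EE :: "nat \<Rightarrow> nat \<Rightarrow> nat \<Rightarrow> bool" where
  "EE N m n \<longleftrightarrow> adj N (from_nat m) (from_nat n) \<and> m \<in> VV N \<and> n \<in> VV N"

lemma EE_adj: "EE N (to_nat u) (to_nat v) \<longleftrightarrow> adj N u v"
  unfolding EE_def VV_def using adj_in[of N u v] adj_in[of N v u] adj_sym[of N u v] by auto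

lemma sg: "simple_graph (VV N) (EE N)"
  unfolding simple_graph_def
proof (intro conjI allI impI)
  show "finite (VV N)" unfolding VV_def using finite_Vs by simp
next
  fix u v assume "EE N u v" thus "u \<in> VV N" "v \<in> VV N" unfolding EE_def by auto
next
  fix u v assume "EE N u v" thus "EE N v u" unfolding EE_def using adj_sym by blast
next
  fix v show "\<not> EE N v v" unfolding EE_def using adj_irr by blast
qed

lemma EE_cases: "EE N m n \<Longrightarrow> \<exists>u v. m = to_nat u \<and> n = to_nat v \<and> adj N u v"
  unfolding EE_def VV_def by auto

lemma wc_iff: "worm_coloring (VV N) (EE N) c \<longleftrightarrow> wc N (c \<circ> to_nat)"
proof
  assume h: "worm_coloring (VV N) (EE N) c"
  show "wc N (c \<circ> to_nat)" unfolding wc_def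
  proof (intro allI impI)
    fix u v w assume "adj N u v \<and> adj N v w \<and> adj N u w"
    hence "Defs.triangle (EE N) (to_nat u) (to_nat v) (to_nat w)" unfolding Defs.triangle_def EE_adj by blast
    thus "card {(c \<circ> to_nat) u, (c \<circ> to_nat) v, (c \<circ> to_nat) w} = 2"
      using h unfolding worm_coloring_def by simp
  qed
next
  assume h: "wc N (c \<circ> to_nat)"
  show "worm_coloring (VV N) (EE N) c" unfolding worm_coloring_def
  proof (intro allI impI)
    fix x y z assume t: "Defs.triangle (EE N) x y z"
    then obtain u v where uv: "x = to_nat u" "y = to_nat v" "adj N u v"
      unfolding Defs.triangle_def using EE_cases by blast
    from t obtain v' w where vw: "y = to_nat v'" "z = to_nat w" "adj N v' w"
      unfolding Defs.triangle_def using EE_cases by blast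
    have "v' = v" using uv vw by simp
    have "adj N u w" using t uv vw unfolding Defs.triangle_def by (simp add: EE_adj)
    thus "card {c x, c y, c z} = 2" using h uv vw \<open>v' = v\<close> unfolding wc_def by auto
  qed
qed

lemma nc_eq: "num_colors (VV N) c = card ((c \<circ> to_nat) ` Vs N)"
  unfolding num_colors_def VV_def by (simp add: image_comp)

lemma feas: "worm_feasible (VV N) (EE N) = {s. \<exists>c. wc N c \<and> card (c ` Vs N) = s}"
proof (intro set_eqI iffI)
  fix s assume "s \<in> worm_feasible (VV N) (EE N)"
  then obtain c where c: "worm_coloring (VV N) (EE N) c" "num_colors (VV N) c = s"
    unfolding worm_feasible_def by blast
  have "wc N (c \<circ> to_nat)" using c(1) wc_iff by blast
  moreover have "card ((c \<circ> to_nat) ` Vs N) = s" using c(2) nc_eq by metis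
  ultimately show "s \<in> {s. \<exists>c. wc N c \<and> card (c ` Vs N) = s}" by blast
next
  fix s assume "s \<in> {s. \<exists>c. wc N c \<and> card (c ` Vs N) = s}"
  then obtain c where c: "wc N c" "card (c ` Vs N) = s" by blast
  hence "worm_coloring (VV N) (EE N) (c \<circ> from_nat) \<and> num_colors (VV N) (c \<circ> from_nat) = s"
    using wc_iff[of N "c \<circ> from_nat"] nc_eq[of N "c \<circ> from_nat"] by (simp add: comp_def)
  thus "s \<in> worm_feasible (VV N) (EE N)" unfolding worm_feasible_def by blast
qed

lemma cardle2: assumes w: "wc N c" shows "card (c ` Vs N) \<le> 2 \<or> card (c ` Vs N) \<ge> Suc N"
proof (cases "c X = c Y")
  case True thus ?thesis using modeB w by blast
next
  case False
  have "card (c ` Vs N) \<le> card {c X, c Y}" using modeA[OF w False] by (intro card_mono) auto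
  also have "\<dots> \<le> 2" by (simp add: card_insert_if)
  finally show ?thesis by blast
qed

lemma XY: "X \<in> Vs N" "Y \<in> Vs N" unfolding Vs_def by auto

theorem mainTheorem4:
  fixes m :: nat
  assumes "m \<ge> 1"
  shows "\<exists>(V :: nat set) E a. simple_graph V E \<and> worm_colorable V E \<and>
           worm_min V E < a \<and> a + m - 1 < worm_max V E \<and>
           (\<forall>k\<in>{a..a + m - 1}. k \<notin> worm_feasible V E)"
proof -
  define N where "N = m + 2"
  define F where "F = worm_feasible (VV N) (EE N)"
  have Fchar: "F = {s. \<exists>c. wc N c \<and> card (c ` Vs N) = s}" unfolding F_def by (rule feas)
  have "cA ` Vs N \<subseteq> {0, 1}" using modeA[OF wc_cA, of N] by simp
  moreover have "{0,1} \<subseteq> cA ` Vs N"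
  proof -
    have "cA X \<in> cA ` Vs N" "cA Y \<in> cA ` Vs N" using XY[of N] by (blast intro: imageI)+
    thus ?thesis by simp
  qed
  ultimately have "cA ` Vs N = {0,1}" by blast
  hence "card (cA ` Vs N) = 2" by simp
  hence two: "2 \<in> F" unfolding Fchar using wc_cA[of N] by blast
  have big: "card (cB ` Vs N) \<in> F" unfolding Fchar using wc_cB[of N] by blast
  have bigge: "card (cB ` Vs N) \<ge> Suc N" using modeB[OF wc_cB] by simp
  have fin: "finite F"
  proof (rule finite_subset)
    show "F \<subseteq> {..card (Vs N)}" unfolding Fchar using card_image_le[OF finite_Vs] by auto
  qed simp
  have "worm_min (VV N) (EE N) \<le> 2" unfolding worm_min_def F_def[symmetric] using two fin by simp
  moreover have "worm_max (VV N) (EE N) \<ge> Suc N" unfolding worm_max_def F_def[symmetric]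
    using Max_ge[OF fin big] bigge by linarith
  moreover have "\<forall>k\<in>{3..3 + m - 1}. k \<notin> F"
  proof (intro ballI notI)
    fix k assume k: "k \<in> {3..3 + m - 1}" and "k \<in> F"
    then obtain c where c: "wc N c" "card (c ` Vs N) = k" unfolding Fchar by blast
    have "k \<le> 2 \<or> k \<ge> Suc N" using cardle2[OF c(1)] c(2) by simp
    thus False using k unfolding N_def by simp
  qed
  moreover have "worm_colorable (VV N) (EE N)" unfolding worm_colorable_def
  proof
    show "worm_coloring (VV N) (EE N) (cA \<circ> from_nat)"
      using wc_iff[of N "cA \<circ> from_nat"] wc_cA by (simp add: comp_def)
  qed
  ultimately have "simple_graph (VV N) (EE N) \<and> worm_colorable (VV N) (EE N) \<and>
      worm_min (VV N) (EE N) < 3 \<and> 3 + m - 1 < worm_max (VV N) (EE N) \<and>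
      (\<forall>k\<in>{3..3 + m - 1}. k \<notin> worm_feasible (VV N) (EE N))"
    using sg[of N] unfolding F_def N_def by simp
  thus ?thesis by blast
qed

end
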